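(* Let $\Omega$ be a quadratic form on $\mathbb{R}^3$ of signature $(-,+,+)$ and let $S$ be a non-degenerate hyperbolic conic other than a circle, horocycle or hypercycle. Let $F$ be a non-ideal focus of $S$ and let $d$ be the corresponding directrix (the polar of $F$ with respect to $S$). Then $S$ consists of all points $x$ of the hyperbolic plane satisfying \[\delta(F,x)=\epsilon\cdot\delta(d,x)\] for some positive constant $\epsilon$, where $\delta(F,x)=\cosh\operatorname{dist}(x,F^\circ)$ if $F$ is a de Sitter point and $\delta(F,x)=\sinh\operatorname{dist}(x,F)$ if $F$ is a hyperbolic point; and $\delta(d,x)=\cosh\operatorname{dist}(x,d^\circ)$ if $d$ is a de Sitter line, $\delta(d,x)=e^{\operatorname{dist}(x,H_d)}$ if $d$ is tangent to the absolute, and $\delta(d,x)=|\sinh\operatorname{dist}(x,d)|$ if $d$ is a hyperbolic line.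
   Context: In $P(\mathbb{R}^3)$, a point $[v]$ is hyperbolic, ideal or de Sitter according as $\Omega(v,v)<0$, $=0$, $>0$; the hyperbolic plane is the set of hyperbolic points with the Cayley–Klein (hyperbolic) metric. The absolute polarity sends $[v]$ to its polar line $v^\circ=\{[w]:\Omega(v,w)=0\}$ and a line to its pole; a de Sitter point's polar is a hyperbolic line; a line is de Sitter if it misses the closed disk $\Omega\le0$ (its pole is then hyperbolic), hyperbolic if it meets the interior, tangent if it touches the absolute. A focus of $S$ is an intersection point of two (complex) common tangent lines of $S$ and the absolute $\Omega=0$ (if $S$ is tangent to the absolute, the tangency point also counts). $H_d$ denotes a fixed horocycle centered at the ideal point $d^\circ$, and distances to horocycles are signed: negative for points inside the horocycle, positive outside. $\operatorname{dist}(x,\ell)$ denotes point-to-line distance in the hyperbolic plane. *)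

theory Defs
  imports "HOL-Analysis.Analysis"
begin

text \<open>Points of P(R^3) are represented by nonzero vectors of type real^3; lines by nonzero
  covectors l (the line is the set of [w] with l \<bullet> w = 0).  All notions below are
  invariant under rescaling of representatives.\<close>

definition bil :: "real^3^3 \<Rightarrow> real^3 \<Rightarrow> real^3 \<Rightarrow> real" where
  "bil M v w = v \<bullet> (M *v w)"

definition signature_mpp :: "real^3^3 \<Rightarrow> bool" where
  "signature_mpp A \<longleftrightarrow> (\<exists>P::real^3^3. invertible P \<and>
     transpose P ** A ** P = (\<chi> i j. if i = j then (if i = 1 then -1 else 1) else 0))"

definition hyperbolic_pt :: "real^3^3 \<Rightarrow> real^3 \<Rightarrow> bool" where
  "hyperbolic_pt A x \<longleftrightarrow> bil A x x < 0"

definition ideal_pt :: "real^3^3 \<Rightarrow> real^3 \<Rightarrow> bool" where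
  "ideal_pt A x \<longleftrightarrow> bil A x x = 0"

definition deSitter_pt :: "real^3^3 \<Rightarrow> real^3 \<Rightarrow> bool" where
  "deSitter_pt A x \<longleftrightarrow> bil A x x > 0"

definition hdist :: "real^3^3 \<Rightarrow> real^3 \<Rightarrow> real^3 \<Rightarrow> real" where
  "hdist A x y = arcosh (\<bar>bil A x y\<bar> / sqrt (bil A x x * bil A y y))"

definition hline_pts :: "real^3^3 \<Rightarrow> real^3 \<Rightarrow> (real^3) set" where
  "hline_pts A l = {w. hyperbolic_pt A w \<and> l \<bullet> w = 0}"

definition setdist_h :: "real^3^3 \<Rightarrow> real^3 \<Rightarrow> (real^3) set \<Rightarrow> real" where
  "setdist_h A x S = Inf (hdist A x ` S)"

definition polar_line :: "real^3^3 \<Rightarrow> real^3 \<Rightarrow> real^3" where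
  "polar_line M f = f v* M"

text \<open>Pole (w.r.t. the absolute A) of the line with covector l: the point p with
  polar line l, i.e. p v* A = l.\<close>
definition line_pole :: "real^3^3 \<Rightarrow> real^3 \<Rightarrow> real^3" where
  "line_pole A l = matrix_inv (transpose A) *v l"

definition deSitter_line :: "real^3^3 \<Rightarrow> real^3 \<Rightarrow> bool" where
  "deSitter_line A l \<longleftrightarrow> (\<forall>w. w \<noteq> 0 \<and> l \<bullet> w = 0 \<longrightarrow> bil A w w > 0)"

definition hyperbolic_line :: "real^3^3 \<Rightarrow> real^3 \<Rightarrow> bool" where
  "hyperbolic_line A l \<longleftrightarrow> (\<exists>w. l \<bullet> w = 0 \<and> bil A w w < 0)"

definition tangent_line :: "real^3^3 \<Rightarrow> real^3 \<Rightarrow> bool" where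
  "tangent_line A l \<longleftrightarrow> (\<exists>w. w \<noteq> 0 \<and> l \<bullet> w = 0 \<and> bil A w w = 0) \<and> \<not> hyperbolic_line A l"

definition horocycle :: "real^3^3 \<Rightarrow> real^3 \<Rightarrow> real \<Rightarrow> (real^3) set" where
  "horocycle A p c = {y. hyperbolic_pt A y \<and> \<bar>bil A y p\<bar> / sqrt (- bil A y y) = c}"

definition horo_inside :: "real^3^3 \<Rightarrow> real^3 \<Rightarrow> real \<Rightarrow> real^3 \<Rightarrow> bool" where
  "horo_inside A p c x \<longleftrightarrow> \<bar>bil A x p\<bar> / sqrt (- bil A x x) < c"

definition horo_sdist :: "real^3^3 \<Rightarrow> real^3 \<Rightarrow> real \<Rightarrow> real^3 \<Rightarrow> real" where
  "horo_sdist A p c x =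
     (if horo_inside A p c x then - setdist_h A x (horocycle A p c)
      else setdist_h A x (horocycle A p c))"

definition delta_F :: "real^3^3 \<Rightarrow> real^3 \<Rightarrow> real^3 \<Rightarrow> real" where
  "delta_F A f x =
     (if deSitter_pt A f then cosh (setdist_h A x (hline_pts A (polar_line A f)))
      else sinh (hdist A x f))"

definition delta_d :: "real^3^3 \<Rightarrow> real^3 \<Rightarrow> real \<Rightarrow> real^3 \<Rightarrow> real" where
  "delta_d A l c x =
     (if deSitter_line A l then cosh (hdist A x (line_pole A l))
      else if tangent_line A l then exp (horo_sdist A (line_pole A l) c x)
      else \<bar>sinh (setdist_h A x (hline_pts A l))\<bar>)"

definition cvec :: "real^3 \<Rightarrow> complex^3" where
  "cvec f = (\<chi> i. complex_of_real (f $ i))"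

definition cdot :: "complex^3 \<Rightarrow> complex^3 \<Rightarrow> complex" where
  "cdot a b = (\<Sum>i\<in>UNIV. a $ i * b $ i)"

definition cbil :: "real^3^3 \<Rightarrow> complex^3 \<Rightarrow> complex^3 \<Rightarrow> complex" where
  "cbil M v w = (\<Sum>i\<in>UNIV. \<Sum>j\<in>UNIV. complex_of_real (M $ i $ j) * v $ i * w $ j)"

text \<open>The complex line with covector xi is tangent to the conic M: the restriction
  of the quadratic form to the line is degenerate.\<close>
definition ctangent :: "real^3^3 \<Rightarrow> complex^3 \<Rightarrow> bool" where
  "ctangent M xi \<longleftrightarrow> xi \<noteq> 0 \<and>
     (\<exists>v. v \<noteq> 0 \<and> cdot xi v = 0 \<and> (\<forall>w. cdot xi w = 0 \<longrightarrow> cbil M v w = 0))"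

text \<open>Focus of the conic Q (absolute A): intersection of two distinct (complex) common
  tangents, or a point of tangency of Q with the absolute.\<close>
definition is_focus :: "real^3^3 \<Rightarrow> real^3^3 \<Rightarrow> real^3 \<Rightarrow> bool" where
  "is_focus A Q f \<longleftrightarrow> f \<noteq> 0 \<and>
     ((\<exists>xi1 xi2. ctangent Q xi1 \<and> ctangent A xi1 \<and> ctangent Q xi2 \<and> ctangent A xi2 \<and>
         \<not> (\<exists>k. xi2 = k *s xi1) \<and> cdot xi1 (cvec f) = 0 \<and> cdot xi2 (cvec f) = 0)
      \<or> (bil A f f = 0 \<and> bil Q f f = 0 \<and> (\<exists>k. polar_line Q f = k *s polar_line A f)))"

text \<open>Circles, horocycles, hypercycles: conics in the pencil spanned by the absolute and
  a double line (double contact with the absolute).\<close>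
definition cycle_conic :: "real^3^3 \<Rightarrow> real^3^3 \<Rightarrow> bool" where
  "cycle_conic A Q \<longleftrightarrow> (\<exists>a b (l::real^3). b \<noteq> 0 \<and> l \<noteq> 0 \<and>
      Q = a *\<^sub>R A + b *\<^sub>R (\<chi> i j. l $ i * l $ j))"

definition hyperbolic_conic :: "real^3^3 \<Rightarrow> real^3^3 \<Rightarrow> bool" where
  "hyperbolic_conic A Q \<longleftrightarrow> transpose Q = Q \<and> Q \<noteq> 0 \<and> (\<exists>x. hyperbolic_pt A x \<and> bil Q x x = 0)"

end

theory Submission
  imports Defs
begin


lemma bil_add_left: "bil M (x + y) z = bil M x z + bil M y z"
  by (simp add: bil_def inner_add_left)
lemma bil_add_right: "bil M z (x + y) = bil M z x + bil M z y"
  by (simp add: bil_def inner_add_right matrix_vector_right_distrib)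
lemma bil_diff_left: "bil M (x - y) z = bil M x z - bil M y z"
  by (simp add: bil_def inner_diff_left)
lemma bil_diff_right: "bil M z (x - y) = bil M z x - bil M z y"
  by (simp add: bil_def inner_diff_right matrix_vector_mult_diff_distrib)
lemma bil_scale_left: "bil M (c *\<^sub>R x) z = c * bil M x z"
  by (simp add: bil_def)
lemma bil_scale_right: "bil M z (c *\<^sub>R x) = c * bil M z x"
  by (simp add: bil_def matrix_vector_mult_scaleR)
lemmas bil_lin = bil_add_left bil_add_right bil_diff_left bil_diff_right bil_scale_left bil_scale_right

lemma bil_sym: "transpose A = A \<Longrightarrow> bil A x y = bil A y x"
  unfolding bil_def
  by (metis dot_lmul_matrix inner_commute transpose_matrix_vector)

definition Dform :: "real^3 \<Rightarrow> real^3 \<Rightarrow> real" where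
  "Dform u v = - u$1 * v$1 + u$2 * v$2 + u$3 * v$3"

lemma Dmat: "u \<bullet> ((\<chi> i j. if i = j then (if i = 1 then -1 else 1) else 0 :: real^3^3) *v v) = Dform u v"
  by (simp add: Dform_def inner_vec_def matrix_vector_mult_def sum_3)

lemma transfer:
  assumes "signature_mpp A"
  shows "\<exists>P. invertible P \<and> (\<forall>u v. bil A (P *v u) (P *v v) = Dform u v)"
proof -
  obtain P :: "real^3^3" where P: "invertible P" "transpose P ** A ** P = (\<chi> i j. if i = j then (if i = 1 then -1 else 1) else 0)"
    using assms unfolding signature_mpp_def by blast
  have "bil A (P *v u) (P *v v) = Dform u v" for u v
  proof -
    have "bil A (P *v u) (P *v v) = (u v* transpose P) \<bullet> (A *v (P *v v))"
      by (simp add: bil_def)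
    also have "\<dots> = u \<bullet> (transpose P *v (A *v (P *v v)))" by (rule dot_lmul_matrix)
    also have "\<dots> = u \<bullet> ((transpose P ** A ** P) *v v)" by (simp add: matrix_vector_mul_assoc matrix_mul_assoc)
    finally show ?thesis using P(2) Dmat by simp
  qed
  thus ?thesis using P(1) by blast
qed

lemma minv: "invertible P \<Longrightarrow> P ** matrix_inv P = mat 1 \<and> matrix_inv P ** P = mat 1"
  unfolding matrix_inv_def invertible_def by (rule someI_ex)

lemma minv_vec: "invertible P \<Longrightarrow> P *v (matrix_inv P *v x) = x"
  using minv by (metis matrix_vector_mul_assoc matrix_vector_mul_lid)

lemma D_rcs:
  assumes "Dform u u < 0"
  shows "Dform u v ^ 2 \<ge> Dform u u * Dform v v"
    and "Dform u v ^ 2 = Dform u u * Dform v v \<Longrightarrow> v = (Dform u v / Dform u u) *\<^sub>R u"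
proof -
  define z2 where "z2 = u$1 * v$2 - v$1 * u$2"
  define z3 where "z3 = u$1 * v$3 - v$1 * u$3"
  have id: "Dform u u * (z2^2 + z3^2) = (v$1 * Dform u u - u$1 * Dform u v)^2
        + (u$1)^2 * (Dform u u * Dform v v - (Dform u v)^2)"
    unfolding z2_def z3_def Dform_def by algebra
  have u1: "u$1 \<noteq> 0" using assms unfolding Dform_def
    by (smt (verit, best) zero_le_square)
  have le: "Dform u u * (z2^2 + z3^2) \<le> 0"
    using assms by (simp add: mult_nonpos_nonneg)
  have "(u$1)^2 * (Dform u u * Dform v v - (Dform u v)^2) \<le> 0"
    using id le by (smt (verit) zero_le_power2)
  moreover have "(u$1)^2 > 0" using u1 by simp
  ultimately show "Dform u v ^ 2 \<ge> Dform u u * Dform v v"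
    by (smt (verit) mult_pos_pos)
  assume eq: "Dform u v ^ 2 = Dform u u * Dform v v"
  then have e3: "Dform u u * (z2^2 + z3^2) = (v$1 * Dform u u - u$1 * Dform u v)^2"
    using id by simp
  then have h0: "(v$1 * Dform u u - u$1 * Dform u v)^2 = 0"
    using le by (smt (verit) zero_le_power2)
  then have h2: "v$1 * Dform u u - u$1 * Dform u v = 0" by simp
  have h1: "Dform u u * (z2^2 + z3^2) = 0" using h0 e3 by simp
  then have "z2^2 + z3^2 = 0" using assms by simp
  then have z: "z2 = 0" "z3 = 0" by (smt (verit) zero_le_power2 power_zero_numeral zero_eq_power2)+
  have c: "Dform u v / Dform u u = v$1 / u$1"
    using h2 u1 assms by (simp add: field_simps)
  show "v = (Dform u v / Dform u u) *\<^sub>R u"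
    unfolding c using z u1 unfolding z2_def z3_def
    by (simp add: vec_eq_iff forall_3 field_simps)
qed

locale lor =
  fixes A :: "real^3^3"
  assumes symA: "transpose A = A" and sigA: "signature_mpp A"
begin

abbreviation B where "B \<equiv> bil A"

lemma Bsym: "B x y = B y x" using bil_sym[OF symA] .

lemma rcs:
  assumes "B x x < 0"
  shows "B x y ^ 2 \<ge> B x x * B y y"
    and "B x y ^ 2 = B x x * B y y \<Longrightarrow> y = (B x y / B x x) *\<^sub>R x"
proof -
  obtain P where P: "invertible P" "\<And>u v. bil A (P *v u) (P *v v) = Dform u v"
    using transfer[OF sigA] by blast
  define u where "u = matrix_inv P *v x"
  define v where "v = matrix_inv P *v y"
  have xu: "x = P *v u" and yv: "y = P *v v" using minv_vec[OF P(1)] u_def v_def by auto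
  have uu: "Dform u u < 0" using assms P(2) xu by metis
  show "B x y ^ 2 \<ge> B x x * B y y" using D_rcs(1)[OF uu, of v] P(2) xu yv by simp
  assume "B x y ^ 2 = B x x * B y y"
  then have "v = (Dform u v / Dform u u) *\<^sub>R u" using D_rcs(2)[OF uu, of v] P(2) xu yv by simp
  then show "y = (B x y / B x x) *\<^sub>R x" using P(2) xu yv
    by (metis matrix_vector_mult_scaleR)
qed

lemma exists_timelike: "\<exists>h. B h h < 0"
proof -
  obtain P where P: "invertible P" "\<And>u v. bil A (P *v u) (P *v v) = Dform u v"
    using transfer[OF sigA] by blast
  have "Dform (axis 1 1) (axis 1 1) = -1" by (simp add: Dform_def axis_def)
  thus ?thesis using P(2) by (metis neg_less_0_iff_less zero_less_one)
qed

lemma A_inj: "A *v x = 0 \<Longrightarrow> x = 0"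
proof -
  assume Ax: "A *v x = 0"
  obtain P where P: "invertible P" "\<And>u v. bil A (P *v u) (P *v v) = Dform u v"
    using transfer[OF sigA] by blast
  define u where "u = matrix_inv P *v x"
  have xu: "x = P *v u" using minv_vec[OF P(1)] u_def by auto
  have "Dform u v = 0" for v
  proof -
    have "Dform u v = B (P *v v) x" using P(2)[of u v] xu Bsym by metis
    thus ?thesis using Ax by (simp add: bil_def)
  qed
  from this[of "axis 1 1"] this[of "axis 2 1"] this[of "axis 3 1"] have "u = 0"
    by (simp add: Dform_def axis_def vec_eq_iff forall_3)
  thus "x = 0" using xu by simp
qed

lemma invA: "invertible A"
  using A_inj matrix_left_invertible_ker invertible_left_inverse by blast


lemma null_orth:
  assumes "p \<noteq> 0" "B p p = 0" "B z p = 0" shows "B z z \<ge> 0"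
proof (rule ccontr)
  assume "\<not> B z z \<ge> 0"
  then have zz: "B z z < 0" by simp
  have "B z p ^ 2 = B z z * B p p" using assms by simp
  then have "p = (B z p / B z z) *\<^sub>R z" using rcs(2)[OF zz] by blast
  then show False using assms by simp
qed

lemma timelike_null:
  assumes "B x x < 0" "p \<noteq> 0" "B p p = 0" shows "B x p \<noteq> 0"
  using null_orth[OF assms(2,3), of x] assms(1) by linarith

lemma orth_exists:
  assumes "B p p > 0" shows "\<exists>w. B w w < 0 \<and> B w p = 0"
proof -
  obtain h where h: "B h h < 0" using exists_timelike by blast
  define w where "w = h - (B h p / B p p) *\<^sub>R p"
  have "B w p = 0" using assms unfolding w_def by (simp add: bil_lin)
  moreover have "B w w = B h h - (B h p)^2 / B p p"
    using assms unfolding w_def by (simp add: bil_lin Bsym[of p h] field_simps power2_eq_square)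
  moreover have "(B h p)^2 / B p p \<ge> 0" using assms by simp
  ultimately show ?thesis using h by (metis diff_less_0_iff_less le_less_trans not_le add_le_same_cancel1 diff_add_cancel)
qed

definition pole where "pole l = matrix_inv A *v l"

lemma A_pole: "A *v pole l = l"
  unfolding pole_def using minv_vec[OF invA] .

lemma B_pole: "B w (pole l) = w \<bullet> l"
  by (simp add: bil_def A_pole)

lemma line_pole_eq: "line_pole A l = pole l"
  by (simp add: line_pole_def pole_def symA)

lemma pole_nz: "l \<noteq> 0 \<Longrightarrow> pole l \<noteq> 0"
  using A_pole by (metis matrix_vector_mult_0_right)

lemma sqrt_ratio:
  fixes a b :: real
  assumes "0 < b" "b \<le> a^2"
  shows "\<bar>a\<bar> / sqrt b \<ge> 1" "(\<bar>a\<bar> / sqrt b)^2 = a^2 / b"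
proof -
  have "sqrt b \<le> sqrt (a^2)" using assms by (simp only: real_sqrt_le_iff)
  then have "sqrt b \<le> \<bar>a\<bar>" by simp
  then show "\<bar>a\<bar> / sqrt b \<ge> 1" using assms by simp
  show "(\<bar>a\<bar> / sqrt b)^2 = a^2 / b" using assms by (simp add: power_divide)
qed

lemma hdist_props:
  assumes "B x x < 0" "B y y < 0"
  shows "hdist A x y \<ge> 0" "cosh (hdist A x y) = \<bar>B x y\<bar> / sqrt (B x x * B y y)"
    "(cosh (hdist A x y))^2 = (B x y)^2 / (B x x * B y y)"
    "\<bar>B x y\<bar> / sqrt (B x x * B y y) \<ge> 1"
proof -
  have p: "0 < B x x * B y y" using assms by (simp add: mult_neg_neg)
  have le: "B x x * B y y \<le> (B x y)^2" using rcs(1)[OF assms(1)] .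
  note s = sqrt_ratio[OF p le]
  show "\<bar>B x y\<bar> / sqrt (B x x * B y y) \<ge> 1" using s(1) .
  show "hdist A x y \<ge> 0" unfolding hdist_def using s(1) by simp
  show c: "cosh (hdist A x y) = \<bar>B x y\<bar> / sqrt (B x x * B y y)" unfolding hdist_def using s(1) by simp
  show "(cosh (hdist A x y))^2 = (B x y)^2 / (B x x * B y y)" using c s(2) by simp
qed


lemma line_dist:
  assumes pp: "B p p > 0" and xx: "B x x < 0"
  defines "m \<equiv> Inf (hdist A x ` {w. B w w < 0 \<and> B w p = 0})"
  shows "m \<ge> 0" "(cosh m)^2 = 1 + (B x p)^2 / (- B x x * B p p)"
proof -
  define w0 where "w0 = x - (B x p / B p p) *\<^sub>R p"
  have w0p: "B w0 p = 0" using pp unfolding w0_def by (simp add: bil_lin)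
  have w0w0: "B w0 w0 = B x x - (B x p)^2 / B p p"
    using pp unfolding w0_def by (simp add: bil_lin Bsym[of p x] field_simps power2_eq_square)
  have xw0: "B x w0 = B w0 w0"
    using pp unfolding w0_def by (simp add: bil_lin Bsym[of p x] field_simps power2_eq_square)
  have "(B x p)^2 / B p p \<ge> 0" using pp by simp
  then have w0neg: "B w0 w0 < 0" using xx w0w0 by linarith
  have mem: "w0 \<in> {w. B w w < 0 \<and> B w p = 0}" using w0neg w0p by simp
  have minim: "hdist A x w0 \<le> hdist A x w" if w: "B w w < 0" "B w p = 0" for w
  proof -
    have xw: "B x w = B w0 w"
      unfolding w0_def using w by (simp add: bil_lin Bsym[of p w])
    have c1: "(cosh (hdist A x w0))^2 = B w0 w0 / B x x"
      using hdist_props(3)[OF xx w0neg] xw0 w0neg by (simp add: power2_eq_square)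
    have c2: "(cosh (hdist A x w))^2 = (B w0 w)^2 / (B x x * B w w)"
      using hdist_props(3)[OF xx w(1)] xw by simp
    have r: "(B w0 w)^2 \<ge> B w0 w0 * B w w" using rcs(1)[OF w0neg] .
    have pos: "B x x * B w w > 0" using xx w by (simp add: mult_neg_neg)
    have "B w0 w0 / B x x = (B w0 w0 * B w w) / (B x x * B w w)" using w by simp
    also have "\<dots> \<le> (B w0 w)^2 / (B x x * B w w)" by (rule divide_right_mono) (use r pos in auto)
    finally have "(cosh (hdist A x w0))^2 \<le> (cosh (hdist A x w))^2" using c1 c2 by simp
    then have "cosh (hdist A x w0) \<le> cosh (hdist A x w)"
      using cosh_real_nonneg power2_le_imp_le by blast
    thus ?thesis using cosh_real_nonneg_le_iff hdist_props(1) xx w0neg w(1) by blast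
  qed
  have meq: "m = hdist A x w0" unfolding m_def
    by (rule cInf_eq_minimum) (use mem minim in auto)
  show "m \<ge> 0" using meq hdist_props(1)[OF xx w0neg] by simp
  have "(cosh m)^2 = B w0 w0 / B x x"
    using meq hdist_props(3)[OF xx w0neg] xw0 w0neg by (simp add: power2_eq_square)
  also have "\<dots> = 1 + (B x p)^2 / (- B x x * B p p)"
    using w0w0 xx pp by (simp add: field_simps)
  finally show "(cosh m)^2 = 1 + (B x p)^2 / (- B x x * B p p)" .
qed


lemma horo_ineq:
  fixes a b X Y u :: real
  assumes "X > 0" "Y > 0" "a \<noteq> 0" "b \<noteq> 0" "a^2 * X + b^2 * Y \<le> 2 * \<bar>a\<bar> * \<bar>b\<bar> * \<bar>u\<bar>"
  defines "t \<equiv> \<bar>b\<bar> * sqrt Y / (sqrt X * \<bar>a\<bar>)"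
  shows "\<bar>u\<bar> / (sqrt X * sqrt Y) \<ge> (t + inverse t) / 2"
proof -
  define sX where "sX = sqrt X"
  define sY where "sY = sqrt Y"
  have sX: "sX > 0" "X = sX^2" using assms(1) unfolding sX_def by auto
  have sY: "sY > 0" "Y = sY^2" using assms(2) unfolding sY_def by auto
  have aa: "\<bar>a\<bar> > 0" "\<bar>b\<bar> > 0" using assms by auto
  have "(t + inverse t) / 2 = (b^2 * sY^2 + a^2 * sX^2) / (2 * \<bar>a\<bar> * \<bar>b\<bar> * sX * sY)"
    unfolding t_def sX_def[symmetric] sY_def[symmetric] using sX sY aa
    by (simp add: field_simps power2_eq_square) (simp add: abs_mult_self_eq[symmetric] mult.assoc)?
  also have "\<dots> \<le> (2 * \<bar>a\<bar> * \<bar>b\<bar> * \<bar>u\<bar>) / (2 * \<bar>a\<bar> * \<bar>b\<bar> * sX * sY)"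
    by (rule divide_right_mono) (use assms(5) sX sY aa in \<open>auto simp: algebra_simps\<close>)
  also have "\<dots> = \<bar>u\<bar> / (sX * sY)" using aa sX sY by (simp add: field_simps)
  finally show ?thesis unfolding sX_def sY_def .
qed


lemma horo_dist:
  assumes p: "p \<noteq> 0" "B p p = 0" and c: "c > 0" and xx: "B x x < 0"
  defines "t \<equiv> \<bar>B x p\<bar> / sqrt (- B x x) / c"
  shows "t > 0" "Inf (hdist A x ` horocycle A p c) = \<bar>ln t\<bar>"
proof -
  define b where "b = B x p"
  have b: "b \<noteq> 0" unfolding b_def using timelike_null[OF xx p] .
  define X where "X = - B x x"
  have X: "X > 0" using xx X_def by simp
  show tpos: "t > 0" unfolding t_def using b[unfolded b_def] X[unfolded X_def] c by simp
  have lower: "\<bar>ln t\<bar> \<le> hdist A x y" if y: "y \<in> horocycle A p c" for y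
  proof -
    have yy: "B y y < 0" and yc: "\<bar>B y p\<bar> / sqrt (- B y y) = c"
      using y unfolding horocycle_def hyperbolic_pt_def by auto
    define a where "a = B y p"
    have a: "a \<noteq> 0" unfolding a_def using timelike_null[OF yy p] .
    define Y where "Y = - B y y"
    have Y: "Y > 0" using yy Y_def by simp
    define z where "z = a *\<^sub>R x - b *\<^sub>R y"
    have "B z p = 0" unfolding z_def a_def b_def by (simp add: bil_lin)
    then have "B z z \<ge> 0" using null_orth[OF p] by blast
    moreover have "B z z = a^2 * B x x - 2 * a * b * B x y + b^2 * B y y"
      unfolding z_def by (simp add: bil_lin Bsym[of y x] power2_eq_square algebra_simps)
    ultimately have "a^2 * X + b^2 * Y \<le> - 2 * a * b * B x y" unfolding X_def Y_def by linarith
    also have "\<dots> \<le> 2 * \<bar>a\<bar> * \<bar>b\<bar> * \<bar>B x y\<bar>" by (simp add: abs_mult[symmetric] abs_le_iff)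
    finally have ineq: "a^2 * X + b^2 * Y \<le> 2 * \<bar>a\<bar> * \<bar>b\<bar> * \<bar>B x y\<bar>" .
    have teq: "t = \<bar>b\<bar> * sqrt Y / (sqrt X * \<bar>a\<bar>)"
    proof -
      have "c = \<bar>a\<bar> / sqrt Y" using yc a_def Y_def by simp
      then have e: "\<bar>a\<bar> = c * sqrt Y" using Y by (simp add: field_simps)
      show ?thesis unfolding t_def b_def[symmetric] X_def[symmetric] e using Y c by simp
    qed
    have "cosh (hdist A x y) = \<bar>B x y\<bar> / (sqrt X * sqrt Y)"
      using hdist_props(2)[OF xx yy] unfolding X_def Y_def by (simp add: real_sqrt_mult[symmetric])
    also have "\<dots> \<ge> (t + inverse t) / 2" unfolding teq by (rule horo_ineq[OF X Y a b ineq])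
    finally have "cosh (ln t) \<le> cosh (hdist A x y)" using cosh_ln_real[OF tpos] by simp
    then have ch: "cosh \<bar>ln t\<bar> \<le> cosh (hdist A x y)" by (cases "ln t \<ge> 0") auto
    show ?thesis using cosh_real_nonneg_le_iff[of "\<bar>ln t\<bar>" "hdist A x y"] hdist_props(1)[OF xx yy] ch by simp
  qed
  define tau where "tau = - (b^2 / c^2 + B x x) / (2 * b)"
  define y0 where "y0 = x + tau *\<^sub>R p"
  have y0y0: "B y0 y0 = -(b^2 / c^2)"
    unfolding y0_def tau_def using b p(2) by (simp add: bil_lin Bsym[of p x] b_def[symmetric] field_simps power2_eq_square)
  have y0p: "B y0 p = b" unfolding y0_def using p(2) by (simp add: bil_lin b_def)
  have xy0: "B x y0 = - (X + b^2/c^2) / 2"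
    unfolding y0_def tau_def X_def using b by (simp add: bil_lin b_def[symmetric] field_simps power2_eq_square)
  have y0neg: "B y0 y0 < 0" using y0y0 b c by (simp add: divide_pos_pos)
  have sq1: "sqrt (- B y0 y0) = \<bar>b\<bar> / c" using y0y0 c
    by (simp add: real_sqrt_divide)
  have mem: "y0 \<in> horocycle A p c"
    unfolding horocycle_def hyperbolic_pt_def using y0neg sq1 y0p b c by simp
  have sq2: "sqrt (B x x * B y0 y0) = sqrt X * \<bar>b\<bar> / c"
  proof -
    have "B x x * B y0 y0 = X * (b/c)^2" using y0y0 unfolding X_def by (simp add: power_divide)
    then have "sqrt (B x x * B y0 y0) = sqrt X * \<bar>b/c\<bar>" by (simp add: real_sqrt_mult)
    thus ?thesis using c by simp
  qed
  have "\<bar>B x y0\<bar> / sqrt (B x x * B y0 y0) = (t + inverse t) / 2"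
  proof -
    have t2: "t = \<bar>b\<bar> / (sqrt X * c)" unfolding t_def b_def X_def by simp
    have sX: "sqrt X > 0" "(sqrt X)^2 = X" using X by auto
    have "\<bar>B x y0\<bar> = (X + b^2/c^2) / 2" 
    proof -
      have "b^2/c^2 \<ge> 0" by simp
      then have "X + b^2/c^2 \<ge> 0" using X by linarith
      thus ?thesis unfolding xy0 by simp
    qed
    thus ?thesis unfolding sq2 t2 using sX b c
      by (simp add: field_simps power2_eq_square) (simp add: abs_mult_self_eq[symmetric] mult.assoc)?
  qed
  also have "\<dots> = cosh \<bar>ln t\<bar>" using cosh_ln_real[OF tpos] by (cases "ln t \<ge> 0") auto
  finally have eqc: "\<bar>B x y0\<bar> / sqrt (B x x * B y0 y0) = cosh \<bar>ln t\<bar>" .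
  have hy0: "hdist A x y0 = \<bar>ln t\<bar>" unfolding hdist_def eqc by (rule arcosh_cosh_real) simp
  have "\<bar>ln t\<bar> \<in> hdist A x ` horocycle A p c" using mem hy0 by (metis image_eqI)
  then show "Inf (hdist A x ` horocycle A p c) = \<bar>ln t\<bar>"
    by (intro cInf_eq_minimum) (use mem lower in auto)
qed


lemma polar_set: "hline_pts A (polar_line A f) = {w. B w w < 0 \<and> B w f = 0}"
  unfolding hline_pts_def polar_line_def hyperbolic_pt_def
  by (auto simp: dot_lmul_matrix bil_def[symmetric] Bsym[of f])

lemma deltaF:
  assumes f: "\<not> ideal_pt A f" and xx: "B x x < 0"
  shows "delta_F A f x \<ge> 0 \<and> (delta_F A f x)^2 = ((B x f)^2 - B x x * B f f) / \<bar>B x x * B f f\<bar>"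
proof (cases "deSitter_pt A f")
  case True
  then have ff: "B f f > 0" by (simp add: deSitter_pt_def)
  note L = line_dist[OF ff xx]
  have "delta_F A f x = cosh (Inf (hdist A x ` {w. B w w < 0 \<and> B w f = 0}))"
    using True by (simp add: delta_F_def setdist_h_def polar_set)
  moreover have "\<bar>B x x * B f f\<bar> = - B x x * B f f" using xx ff
    by (simp add: abs_mult)
  ultimately show ?thesis using L(2) xx ff by (simp add: field_simps)
next
  case False
  then have ff: "B f f < 0" using f by (simp add: deSitter_pt_def ideal_pt_def)
  have dF: "delta_F A f x = sinh (hdist A x f)" using False by (simp add: delta_F_def)
  have pos: "B x x * B f f > 0" using xx ff by (simp add: mult_neg_neg)
  have "(sinh (hdist A x f))^2 = (B x f)^2 / (B x x * B f f) - 1"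
    using hdist_props(3)[OF xx ff] by (simp add: sinh_square_eq)
  also have "\<dots> = ((B x f)^2 - B x x * B f f) / \<bar>B x x * B f f\<bar>" using pos xx ff by (simp add: diff_divide_distrib)
  finally show ?thesis using dF hdist_props(1)[OF xx ff] by simp
qed

lemma deltad:
  assumes d: "d \<noteq> 0" and c: "c > 0"
  shows "\<exists>C>0. \<forall>x. B x x < 0 \<longrightarrow> delta_d A d c x \<ge> 0 \<and> (delta_d A d c x)^2 = C * (x \<bullet> d)^2 / (- B x x)"
proof -
  define p where "p = pole d"
  have Bp: "B w p = w \<bullet> d" for w unfolding p_def by (rule B_pole)
  have pnz: "p \<noteq> 0" unfolding p_def using pole_nz[OF d] .
  have lp: "line_pole A d = p" unfolding p_def by (rule line_pole_eq)
  have hp: "hline_pts A d = {w. B w w < 0 \<and> B w p = 0}"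
    unfolding hline_pts_def hyperbolic_pt_def Bp by (auto simp: inner_commute)
  show ?thesis
  proof (cases "deSitter_line A d")
    case True
    have pp: "B p p < 0"
    proof (rule ccontr)
      assume "\<not> B p p < 0"
      then consider "B p p > 0" | "B p p = 0" by linarith
      then show False
      proof cases
        case 1
        then obtain w where w: "B w w < 0" "B w p = 0" using orth_exists by blast
        then have "w \<noteq> 0" by (auto simp: bil_def)
        then show False using True w unfolding deSitter_line_def Bp by (auto simp: inner_commute)
      next
        case 2
        then show False using True pnz Bp[of p] unfolding deSitter_line_def by (auto simp: inner_commute)
      qed
    qed
    have "delta_d A d c x \<ge> 0 \<and> (delta_d A d c x)^2 = (1 / - B p p) * (x \<bullet> d)^2 / (- B x x)"
      if xx: "B x x < 0" for x
    proof -
      have "delta_d A d c x = cosh (hdist A x p)" using True lp by (simp add: delta_d_def)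
      moreover have "(cosh (hdist A x p))^2 = (x \<bullet> d)^2 / (B x x * B p p)"
        using hdist_props(3)[OF xx pp] Bp by simp
      ultimately show ?thesis using xx pp by (simp add: field_simps)
    qed
    moreover have "1 / - B p p > 0" using pp by simp
    ultimately show ?thesis by blast
  next
    case nds: False
    show ?thesis
    proof (cases "tangent_line A d")
      case True
      have nh: "\<not> B p p > 0"
      proof
        assume "B p p > 0"
        then obtain w where "B w w < 0" "B w p = 0" using orth_exists by blast
        then have "hyperbolic_line A d" unfolding hyperbolic_line_def Bp by (auto simp: inner_commute)
        then show False using True unfolding tangent_line_def by blast
      qed
      obtain w where w: "w \<noteq> 0" "d \<bullet> w = 0" "B w w = 0"
        using True unfolding tangent_line_def bil_def by blast
      have pp: "B p p = 0"
      proof (rule ccontr)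
        assume "B p p \<noteq> 0"
        then have pn: "B p p < 0" using nh by linarith
        have "B p w = 0" using w(2) Bp[of w] Bsym[of p w] by (simp add: inner_commute)
        then have "B p w ^ 2 = B p p * B w w" using w(3) by simp
        then have "w = (B p w / B p p) *\<^sub>R p" using rcs(2)[OF pn] by blast
        then show False using \<open>B p w = 0\<close> w(1) by simp
      qed
      have "delta_d A d c x \<ge> 0 \<and> (delta_d A d c x)^2 = (1 / c^2) * (x \<bullet> d)^2 / (- B x x)"
        if xx: "B x x < 0" for x
      proof -
        define t where "t = \<bar>B x p\<bar> / sqrt (- B x x) / c"
        note H = horo_dist[OF pnz pp c xx, folded t_def]
        have sd: "horo_sdist A p c x = ln t"
        proof (cases "horo_inside A p c x")
          case True
          then have "t < 1" unfolding t_def horo_inside_def using c divide_less_eq_1_pos by blast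
          then have "ln t < 0" using H(1) by simp
          thus ?thesis using True H(2) by (simp add: horo_sdist_def setdist_h_def)
        next
          case False
          then have "t \<ge> 1" unfolding t_def horo_inside_def using c le_divide_eq_1_pos not_less by blast
          then have "ln t \<ge> 0" using H(1) by simp
          thus ?thesis using False H(2) by (simp add: horo_sdist_def setdist_h_def)
        qed
        have "delta_d A d c x = t" using nds True lp sd H(1) by (simp add: delta_d_def)
        moreover have "t^2 = (1 / c^2) * (x \<bullet> d)^2 / (- B x x)"
          unfolding t_def using xx Bp[of x] by (simp add: power_divide power_mult_distrib)
        ultimately show ?thesis using H(1) by simp
      qed
      moreover have "1 / c^2 > 0" using c by simp
      ultimately show ?thesis by blast
    next
      case ntg: False
      have hl: "hyperbolic_line A d"
      proof (rule ccontr)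
        assume nhl: "\<not> hyperbolic_line A d"
        have "deSitter_line A d" unfolding deSitter_line_def
        proof (intro allI impI)
          fix w assume w: "w \<noteq> 0 \<and> d \<bullet> w = 0"
          have "\<not> bil A w w < 0" using nhl w unfolding hyperbolic_line_def by blast
          moreover have "bil A w w \<noteq> 0" using ntg nhl w unfolding tangent_line_def by blast
          ultimately show "bil A w w > 0" by linarith
        qed
        then show False using nds by blast
      qed
      obtain w where w: "d \<bullet> w = 0" "B w w < 0" using hl unfolding hyperbolic_line_def by blast
      have wp: "B w p = 0" using w(1) Bp by (simp add: inner_commute)
      have pp: "B p p > 0"
      proof (rule ccontr)
        assume "\<not> B p p > 0"
        moreover have "B w p ^ 2 \<ge> B w w * B p p" using rcs(1)[OF w(2)] .
        ultimately have "B p p = 0" using wp w(2)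
          by (smt (verit, best) mult_neg_neg power_zero_numeral)
        then have "B w p ^ 2 = B w w * B p p" using wp by simp
        then have "p = (B w p / B w w) *\<^sub>R w" using rcs(2)[OF w(2)] by blast
        then show False using wp pnz by simp
      qed
      have "delta_d A d c x \<ge> 0 \<and> (delta_d A d c x)^2 = (1 / B p p) * (x \<bullet> d)^2 / (- B x x)"
        if xx: "B x x < 0" for x
      proof -
        note L = line_dist[OF pp xx]
        have "delta_d A d c x = \<bar>sinh (Inf (hdist A x ` {w. B w w < 0 \<and> B w p = 0}))\<bar>"
          using nds ntg hp by (simp add: delta_d_def setdist_h_def)
        moreover have "(sinh (Inf (hdist A x ` {w. B w w < 0 \<and> B w p = 0})))^2 = (1 / B p p) * (x \<bullet> d)^2 / (- B x x)"
          using L(2) Bp[of x] xx pp by (simp add: sinh_square_eq field_simps)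
        ultimately show ?thesis by simp
      qed
      moreover have "1 / B p p > 0" using pp by simp
      ultimately show ?thesis by blast
    qed
  qed
qed

end



definition cmv :: "real^3^3 \<Rightarrow> complex^3 \<Rightarrow> complex^3" where
  "cmv M v = (\<chi> j. \<Sum>i\<in>UNIV. complex_of_real (M$i$j) * v$i)"

lemma cbil_cmv: "cbil M v w = cdot (cmv M v) w"
  unfolding cbil_def cdot_def cmv_def
  by (simp add: sum_3 algebra_simps)

lemma cmv_inv:
  assumes "N ** M = mat 1" "transpose M = M"
  shows "(\<Sum>j\<in>UNIV. complex_of_real (N$i$j) * (cmv M v)$j) = v$i"
proof -
  have Msym: "M$l$j = M$j$l" for l j 
  proof -
    have "M$l$j = (transpose M)$l$j" using assms(2) by simp
    thus ?thesis by (simp add: transpose_def)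
  qed
  have "(\<Sum>j\<in>UNIV. complex_of_real (N$i$j) * (cmv M v)$j)
      = (\<Sum>j\<in>UNIV. \<Sum>l\<in>UNIV. complex_of_real (N$i$j) * (complex_of_real (M$l$j) * v$l))"
    unfolding cmv_def by (simp add: sum_distrib_left)
  also have "\<dots> = (\<Sum>l\<in>UNIV. \<Sum>j\<in>UNIV. complex_of_real (N$i$j) * (complex_of_real (M$l$j) * v$l))"
    by (rule sum.swap)
  also have "\<dots> = (\<Sum>l\<in>UNIV. (\<Sum>j\<in>UNIV. complex_of_real (N$i$j * M$j$l)) * v$l)"
    unfolding sum_distrib_right
    by (intro sum.cong refl) (use Msym in auto)
  also have "\<dots> = (\<Sum>l\<in>UNIV. complex_of_real ((N ** M)$i$l) * v$l)"
    unfolding matrix_matrix_mult_def by simp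
  also have "\<dots> = (\<Sum>l\<in>UNIV. (if i = l then v$l else 0))" using assms(1)
    by (intro sum.cong) (auto simp: mat_def)
  also have "\<dots> = v$i" by simp
  finally show ?thesis .
qed

lemma par3:
  fixes u xi :: "complex^3"
  assumes "xi \<noteq> 0" and e12: "u$1 * xi$2 - u$2 * xi$1 = 0"
    and e13: "u$1 * xi$3 - u$3 * xi$1 = 0" and e23: "u$2 * xi$3 - u$3 * xi$2 = 0"
  shows "\<exists>mu. u = mu *s xi"
proof -
  have "xi$1 \<noteq> 0 \<or> xi$2 \<noteq> 0 \<or> xi$3 \<noteq> 0" using assms(1) by (auto simp: vec_eq_iff forall_3)
  then show ?thesis
  proof (elim disjE)
    assume h: "xi$1 \<noteq> 0"
    show ?thesis by (rule exI[of _ "u$1 / xi$1"]) (use h e12 e13 in \<open>auto simp: vec_eq_iff forall_3 field_simps\<close>)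
  next
    assume h: "xi$2 \<noteq> 0"
    show ?thesis by (rule exI[of _ "u$2 / xi$2"]) (use h e12 e23 in \<open>auto simp: vec_eq_iff forall_3 field_simps\<close>)
  next
    assume h: "xi$3 \<noteq> 0"
    show ?thesis by (rule exI[of _ "u$3 / xi$3"]) (use h e13 e23 in \<open>auto simp: vec_eq_iff forall_3 field_simps\<close>)
  qed
qed

lemma par_from_orth:
  fixes u xi :: "complex^3"
  assumes "xi \<noteq> 0" "\<And>w. cdot xi w = 0 \<Longrightarrow> cdot u w = 0"
  shows "\<exists>mu. u = mu *s xi"
proof -
  have e12: "u$1 * xi$2 - u$2 * xi$1 = 0"
    using assms(2)[of "\<chi> k. if k = 1 then xi$2 else if k = 2 then - xi$1 else 0"]
    by (simp add: cdot_def sum_3 algebra_simps)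
  have e13: "u$1 * xi$3 - u$3 * xi$1 = 0"
    using assms(2)[of "\<chi> k. if k = 1 then xi$3 else if k = 3 then - xi$1 else 0"]
    by (simp add: cdot_def sum_3 algebra_simps)
  have e23: "u$2 * xi$3 - u$3 * xi$2 = 0"
    using assms(2)[of "\<chi> k. if k = 2 then xi$3 else if k = 3 then - xi$2 else 0"]
    by (simp add: cdot_def sum_3 algebra_simps)
  have "xi$1 \<noteq> 0 \<or> xi$2 \<noteq> 0 \<or> xi$3 \<noteq> 0" using assms(1) by (auto simp: vec_eq_iff forall_3)
  then show ?thesis
  proof (elim disjE)
    assume h: "xi$1 \<noteq> 0"
    show ?thesis by (rule exI[of _ "u$1 / xi$1"]) (use h e12 e13 in \<open>auto simp: vec_eq_iff forall_3 field_simps\<close>)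
  next
    assume h: "xi$2 \<noteq> 0"
    show ?thesis by (rule exI[of _ "u$2 / xi$2"]) (use h e12 e23 in \<open>auto simp: vec_eq_iff forall_3 field_simps\<close>)
  next
    assume h: "xi$3 \<noteq> 0"
    show ?thesis by (rule exI[of _ "u$3 / xi$3"]) (use h e13 e23 in \<open>auto simp: vec_eq_iff forall_3 field_simps\<close>)
  qed
qed

lemma ctangent_dual:
  assumes sym: "transpose M = M" and inv: "invertible M" and t: "ctangent M xi"
  shows "xi \<noteq> 0" "cbil (matrix_inv M) xi xi = 0"
proof -
  show xnz: "xi \<noteq> 0" using t unfolding ctangent_def by blast
  obtain v where v: "v \<noteq> 0" "cdot xi v = 0" "\<And>w. cdot xi w = 0 \<Longrightarrow> cbil M v w = 0"
    using t unfolding ctangent_def by blast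
  define u where "u = cmv M v"
  have "\<And>w. cdot xi w = 0 \<Longrightarrow> cdot u w = 0" using v(3) cbil_cmv u_def by metis
  then obtain mu where mu: "u = mu *s xi" using par_from_orth[OF xnz] by blast
  define N where "N = matrix_inv M"
  have NM: "N ** M = mat 1" using minv[OF inv] N_def by simp
  have vi: "v$i = mu * (\<Sum>j\<in>UNIV. complex_of_real (N$i$j) * xi$j)" for i
    using cmv_inv[OF NM sym, of i v] unfolding u_def[symmetric] mu
    by (simp add: sum_distrib_left algebra_simps)
  have "mu \<noteq> 0"
  proof
    assume "mu = 0"
    then have "v = 0" using vi by (simp add: vec_eq_iff)
    then show False using v(1) by simp
  qed
  moreover have "cdot xi v = mu * cbil N xi xi"
    unfolding cdot_def cbil_def vi by (simp add: sum_3 algebra_simps)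
  ultimately show "cbil (matrix_inv M) xi xi = 0" using v(2) N_def by simp
qed

definition ccross :: "complex^3 \<Rightarrow> complex^3 \<Rightarrow> complex^3" where
  "ccross a b = vector [a$2 * b$3 - a$3 * b$2, a$3 * b$1 - a$1 * b$3, a$1 * b$2 - a$2 * b$1]"

lemma ccross_comp: "(ccross a b)$1 = a$2 * b$3 - a$3 * b$2" "(ccross a b)$2 = a$3 * b$1 - a$1 * b$3"
  "(ccross a b)$3 = a$1 * b$2 - a$2 * b$1"
  by (simp_all add: ccross_def)

lemma cdot3: "cdot a b = a$1 * b$1 + a$2 * b$2 + a$3 * b$3"
  by (simp add: cdot_def sum_3)

lemma cvec_comp: "(cvec f)$i = complex_of_real (f$i)" by (simp add: cvec_def)

lemma cdot_cvec: "cdot (cvec x) (cvec y) = complex_of_real (x \<bullet> y)"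
  by (simp add: cdot_def cvec_def inner_vec_def)

lemma span2:
  fixes a b :: "complex^3" and f eta :: "real^3"
  assumes a: "a \<noteq> 0" and np: "\<not> (\<exists>k. b = k *s a)" and f: "f \<noteq> 0"
    and aF: "cdot a (cvec f) = 0" and bF: "cdot b (cvec f) = 0" and ef: "eta \<bullet> f = 0"
  shows "\<exists>al be. cvec eta = al *s a + be *s b"
proof -
  define F where "F = cvec f"
  define e where "e = cvec eta"
  define n where "n = ccross a b"
  have Fnz: "F \<noteq> 0" using f unfolding F_def by (auto simp: vec_eq_iff cvec_def)
  have nnz: "n \<noteq> 0"
  proof
    assume "n = 0"
    then have "b$1 * a$2 - b$2 * a$1 = 0" "b$1 * a$3 - b$3 * a$1 = 0" "b$2 * a$3 - b$3 * a$2 = 0"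
      unfolding n_def by (simp_all add: vec_eq_iff forall_3 ccross_comp algebra_simps)
    then show False using par3[OF a] np by blast
  qed
  have aF': "a$1 * F$1 + a$2 * F$2 + a$3 * F$3 = 0" using aF unfolding F_def cdot3 .
  have bF': "b$1 * F$1 + b$2 * F$2 + b$3 * F$3 = 0" using bF unfolding F_def cdot3 .
  have "n$1 * F$2 - n$2 * F$1 = 0" unfolding n_def ccross_comp
  proof -
    have "(a$2 * b$3 - a$3 * b$2) * F$2 - (a$3 * b$1 - a$1 * b$3) * F$1
        = b$3 * (a$1 * F$1 + a$2 * F$2 + a$3 * F$3) - a$3 * (b$1 * F$1 + b$2 * F$2 + b$3 * F$3)"
      by algebra
    thus "(a$2 * b$3 - a$3 * b$2) * F$2 - (a$3 * b$1 - a$1 * b$3) * F$1 = 0" using aF' bF' by simp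
  qed
  moreover have "n$1 * F$3 - n$3 * F$1 = 0" unfolding n_def ccross_comp
  proof -
    have "(a$2 * b$3 - a$3 * b$2) * F$3 - (a$1 * b$2 - a$2 * b$1) * F$1
        = a$2 * (b$1 * F$1 + b$2 * F$2 + b$3 * F$3) - b$2 * (a$1 * F$1 + a$2 * F$2 + a$3 * F$3)"
      by algebra
    thus "(a$2 * b$3 - a$3 * b$2) * F$3 - (a$1 * b$2 - a$2 * b$1) * F$1 = 0" using aF' bF' by simp
  qed
  moreover have "n$2 * F$3 - n$3 * F$2 = 0" unfolding n_def ccross_comp
  proof -
    have "(a$3 * b$1 - a$1 * b$3) * F$3 - (a$1 * b$2 - a$2 * b$1) * F$2
        = b$1 * (a$1 * F$1 + a$2 * F$2 + a$3 * F$3) - a$1 * (b$1 * F$1 + b$2 * F$2 + b$3 * F$3)"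
      by algebra
    thus "(a$3 * b$1 - a$1 * b$3) * F$3 - (a$1 * b$2 - a$2 * b$1) * F$2 = 0" using aF' bF' by simp
  qed
  ultimately obtain c where nc: "n = c *s F" using par3[OF Fnz] by blast
  have cnz: "c \<noteq> 0" using nnz nc by auto
  have FF: "cdot F F \<noteq> 0" unfolding F_def cdot_cvec using f by simp
  define D where "D = cdot n F"
  have "D = c * cdot F F" unfolding D_def nc by (simp add: cdot3 algebra_simps)
  then have Dnz: "D \<noteq> 0" using cnz FF by simp
  have eF: "cdot e F = 0" unfolding e_def F_def cdot_cvec using ef by simp
  have "cdot n e = c * cdot e F" unfolding nc by (simp add: cdot3 algebra_simps)
  then have ne: "cdot n e = 0" using eF by simp
  define al where "al = cdot (ccross e b) F / D"
  define be where "be = cdot (ccross a e) F / D"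
  have cram: "D *s e = (cdot (ccross e b) F) *s a + (cdot (ccross a e) F) *s b + (cdot n e) *s F"
    unfolding D_def n_def by (simp add: vec_eq_iff forall_3 cdot3 ccross_comp) algebra
  have "e = al *s a + be *s b"
  proof -
    have "D *s e = D *s (al *s a + be *s b)"
      using cram ne Dnz unfolding al_def be_def by (simp add: vec_eq_iff forall_3 field_simps)
    thus ?thesis using Dnz by (simp add: vec_eq_iff forall_3 mult.assoc distrib_left[symmetric])
  qed
  thus ?thesis unfolding e_def by blast
qed

lemma cbil_expand:
  assumes "transpose N = N"
  shows "cbil N (al *s a + be *s b) (al *s a + be *s b) = al^2 * cbil N a a + 2 * al * be * cbil N a b + be^2 * cbil N b b"
proof -
  have Ns: "N$i$j = N$j$i" for i j
  proof -
    have "N$i$j = (transpose N)$i$j" using assms by simp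
    thus ?thesis by (simp add: transpose_def)
  qed
  show ?thesis unfolding cbil_def
    by (simp add: sum_3 Ns[of 2 1] Ns[of 3 1] Ns[of 3 2] power2_eq_square algebra_simps)
qed

lemma cbil_cvec: "cbil N (cvec x) (cvec x) = complex_of_real (bil N x x)"
  by (simp add: cbil_def cvec_def bil_def inner_vec_def matrix_vector_mult_def sum_distrib_left algebra_simps)

lemma lemmaG:
  fixes M :: "real^3^3" and f :: "real^3"
  assumes sym: "transpose M = M" and f: "f \<noteq> 0" and van: "\<And>eta. eta \<bullet> f = 0 \<Longrightarrow> bil M eta eta = 0"
  shows "\<exists>g. \<forall>x y. bil M x y = (x \<bullet> f) * (g \<bullet> y) + (g \<bullet> x) * (f \<bullet> y)"
proof -
  note Ms = bil_sym[OF sym]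
  define s where "s = f \<bullet> f"
  have s: "s > 0" using f unfolding s_def by simp
  have van2: "bil M e1 e2 = 0" if "e1 \<bullet> f = 0" "e2 \<bullet> f = 0" for e1 e2
  proof -
    have "(e1 + e2) \<bullet> f = 0" using that by (simp add: inner_add_left)
    then have "bil M (e1 + e2) (e1 + e2) = 0" by (rule van)
    then have "bil M e1 e1 + 2 * bil M e1 e2 + bil M e2 e2 = 0" by (simp add: bil_lin Ms[of e2 e1])
    thus ?thesis using van[OF that(1)] van[OF that(2)] by simp
  qed
  define K where "K = bil M f f"
  define g where "g = (1/s) *\<^sub>R (M *v f) - (K / (2 * s^2)) *\<^sub>R f"
  have gy: "g \<bullet> y = bil M y f / s - K * (f \<bullet> y) / (2 * s^2)" for y
    unfolding g_def bil_def by (simp add: inner_diff_left inner_commute[of f y] inner_commute[of "M *v f" y])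
  have "bil M x y = (x \<bullet> f) * (g \<bullet> y) + (g \<bullet> x) * (f \<bullet> y)" for x y
  proof -
    define a where "a = (x \<bullet> f) / s"
    define b where "b = (y \<bullet> f) / s"
    define x' where "x' = x - a *\<^sub>R f"
    define y' where "y' = y - b *\<^sub>R f"
    have x'f: "x' \<bullet> f = 0" unfolding x'_def a_def s_def using s s_def by (simp add: inner_diff_left)
    have y'f: "y' \<bullet> f = 0" unfolding y'_def b_def s_def using s s_def by (simp add: inner_diff_left)
    have xx: "x = x' + a *\<^sub>R f" and yy: "y = y' + b *\<^sub>R f" unfolding x'_def y'_def by simp_all
    have e0: "bil M x y = bil M x' y' + b * bil M x' f + a * bil M f y' + a * b * K"
      unfolding K_def by (subst xx, subst yy) (simp add: bil_lin algebra_simps)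
    have e1: "bil M x' f = bil M x f - a * K" unfolding x'_def K_def by (simp add: bil_lin)
    have e2: "bil M f y' = bil M y f - b * K" unfolding y'_def K_def by (simp add: bil_lin Ms[of f y])
    have e: "bil M x y = b * bil M x f + a * bil M y f - a * b * K"
      unfolding e0 e1 e2 using van2[OF x'f y'f] by (simp add: algebra_simps)
    show ?thesis unfolding e gy a_def b_def using s
      by (simp add: inner_commute[of f y] inner_commute[of f x] field_simps power2_eq_square)
  qed
  thus ?thesis by blast
qed




lemma minv_vec2: "invertible P \<Longrightarrow> matrix_inv P *v (P *v x) = x"
proof -
  assume "invertible P"
  then have "matrix_inv P ** P = mat 1" using minv by blast
  thus ?thesis by (simp add: matrix_vector_mul_assoc)
qed

lemma symdot:
  fixes M :: "real^'n^'n"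
  shows "transpose M = M \<Longrightarrow> (M *v x) \<bullet> y = x \<bullet> (M *v y)"
proof -
  assume "transpose M = M"
  have "(M *v x) \<bullet> y = (x v* transpose M) \<bullet> y" by (simp only: vector_transpose_matrix)
  also have "\<dots> = x \<bullet> (transpose M *v y)" by (rule dot_lmul_matrix)
  finally show ?thesis using \<open>transpose M = M\<close> by simp
qed

lemma bil_axis: "bil N (axis i 1) (axis j 1) = N$i$j"
proof -
  have "(N *v axis j 1)$i = N$i$j"
    by (simp add: matrix_vector_mult_def axis_def if_distrib cong: if_cong)
  thus ?thesis by (simp add: bil_def inner_axis')
qed

lemma sym_inv:
  fixes A :: "real^'n^'n"
  assumes "transpose A = A" "invertible A"
  shows "transpose (matrix_inv A) = matrix_inv A"
proof -
  have AA: "A ** matrix_inv A = mat 1" "matrix_inv A ** A = mat 1" using minv[OF assms(2)] by auto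
  have "transpose (matrix_inv A) ** A = mat 1"
    using arg_cong[OF AA(1), of transpose] by (simp add: matrix_transpose_mul assms(1))
  then have "transpose (matrix_inv A) = transpose (matrix_inv A) ** (A ** matrix_inv A)" using AA by simp
  also have "\<dots> = matrix_inv A" using \<open>transpose (matrix_inv A) ** A = mat 1\<close>
    by (simp add: matrix_mul_assoc)
  finally show ?thesis .
qed

lemma nonvanish:
  fixes N :: "real^3^3" and f :: "real^3"
  assumes sym: "transpose N = N" and inv: "invertible N" and f: "f \<noteq> 0"
  shows "\<exists>eta. eta \<bullet> f = 0 \<and> bil N eta eta \<noteq> 0"
proof (rule ccontr)
  assume "\<not> ?thesis"
  then have "\<And>eta. eta \<bullet> f = 0 \<Longrightarrow> bil N eta eta = 0" by blast
  then obtain g where g: "\<And>x y. bil N x y = (x \<bullet> f) * (g \<bullet> y) + (g \<bullet> x) * (f \<bullet> y)"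
    using lemmaG[OF sym f] by blast
  have Nij: "N$i$j = f$i * g$j + g$i * f$j" for i j
    using g[of "axis i 1" "axis j 1"] by (simp add: bil_axis inner_axis inner_axis')
  have "det N = 0" unfolding det_3 Nij by algebra
  then show False using inv invertible_det_nz by blast
qed

lemma lemmaF:
  fixes A' Q' :: "real^3^3" and f :: "real^3" and x1 x2 :: "complex^3"
  assumes sA: "transpose A' = A'" and sQ: "transpose Q' = Q'"
    and a1: "cbil A' x1 x1 = 0" and a2: "cbil A' x2 x2 = 0"
    and q1: "cbil Q' x1 x1 = 0" and q2: "cbil Q' x2 x2 = 0"
    and x1: "x1 \<noteq> 0" and np: "\<not> (\<exists>k. x2 = k *s x1)" and f: "f \<noteq> 0"
    and f1: "cdot x1 (cvec f) = 0" and f2: "cdot x2 (cvec f) = 0"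
    and e0: "eta0 \<bullet> f = 0" "bil A' eta0 eta0 \<noteq> 0"
  shows "\<exists>t. \<forall>eta. eta \<bullet> f = 0 \<longrightarrow> bil Q' eta eta = t * bil A' eta eta"
proof -
  define u where "u = cbil A' x1 x2"
  define w where "w = cbil Q' x1 x2"
  have rel: "complex_of_real (bil Q' eta eta) * u = complex_of_real (bil A' eta eta) * w
      \<and> (\<exists>al be. complex_of_real (bil A' eta eta) = 2 * al * be * u)" if ef0: "eta \<bullet> f = 0" for eta
  proof -
    obtain al be where ab: "cvec eta = al *s x1 + be *s x2" using span2[OF x1 np f f1 f2 ef0] by blast
    have "complex_of_real (bil A' eta eta) = 2 * al * be * u"
      using cbil_expand[OF sA, of al x1 be x2] a1 a2 ab u_def by (simp add: cbil_cvec[symmetric])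
    moreover have "complex_of_real (bil Q' eta eta) = 2 * al * be * w"
      using cbil_expand[OF sQ, of al x1 be x2] q1 q2 ab w_def by (simp add: cbil_cvec[symmetric])
    ultimately show ?thesis by (auto simp: algebra_simps)
  qed
  have un: "u \<noteq> 0" using rel[OF e0(1)] e0(2) by auto
  define t where "t = bil Q' eta0 eta0 / bil A' eta0 eta0"
  have "bil Q' eta eta = t * bil A' eta eta" if ef: "eta \<bullet> f = 0" for eta
  proof -
    have r1: "complex_of_real (bil Q' eta eta) * u = complex_of_real (bil A' eta eta) * w" using rel[OF ef] by blast
    have r0: "complex_of_real (bil Q' eta0 eta0) * u = complex_of_real (bil A' eta0 eta0) * w" using rel[OF e0(1)] by blast
    have "complex_of_real (bil Q' eta eta * bil A' eta0 eta0) * u = complex_of_real (bil A' eta eta * bil Q' eta0 eta0) * u"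
    proof -
      have "complex_of_real (bil Q' eta eta * bil A' eta0 eta0) * u = (complex_of_real (bil Q' eta eta) * u) * complex_of_real (bil A' eta0 eta0)"
        by (simp add: algebra_simps)
      also have "\<dots> = complex_of_real (bil A' eta eta) * (complex_of_real (bil A' eta0 eta0) * w)" using r1 by (simp add: algebra_simps)
      also have "\<dots> = complex_of_real (bil A' eta eta) * (complex_of_real (bil Q' eta0 eta0) * u)" using r0 by simp
      also have "\<dots> = complex_of_real (bil A' eta eta * bil Q' eta0 eta0) * u" by (simp add: algebra_simps)
      finally show ?thesis .
    qed
    then have "complex_of_real (bil Q' eta eta * bil A' eta0 eta0) = complex_of_real (bil A' eta eta * bil Q' eta0 eta0)"
      using un by (simp only: mult_cancel_right) simp
    then have "bil Q' eta eta * bil A' eta0 eta0 = bil A' eta eta * bil Q' eta0 eta0" by (simp only: of_real_eq_iff)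
    thus ?thesis unfolding t_def using e0(2) by (simp add: field_simps)
  qed
  thus ?thesis by blast
qed

lemma inv_inv: "invertible P \<Longrightarrow> invertible (matrix_inv P)"
  using minv unfolding invertible_def by blast

lemma transpose_diff_sc: "transpose (X - t *\<^sub>R Y) = transpose X - t *\<^sub>R transpose (Y :: real^'n^'n)"
  by (simp add: transpose_def vec_eq_iff)

lemma bil_diff_sc: "bil (X - t *\<^sub>R Y) x y = bil X x y - t * bil Y x y"
  by (simp add: bil_def matrix_vector_mult_diff_rdistrib scaleR_matrix_vector_assoc[symmetric] inner_diff_right)

context lor
begin

lemma focus_form:
  fixes Q :: "real^3^3" and f :: "real^3"
  assumes sQ: "transpose Q = Q" and dQ: "det Q \<noteq> 0" and foc: "is_focus A Q f" and nid: "\<not> ideal_pt A f"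
  shows "\<exists>t k. t \<noteq> 0 \<and> (\<forall>x y. bil Q x y = (B x y - k * (x \<bullet> (Q *v f)) * (y \<bullet> (Q *v f))
            - (x \<bullet> (A *v f)) * (y \<bullet> (A *v f)) / B f f) / t)"
proof -
  have invQ: "invertible Q" using dQ invertible_det_nz by blast
  have fnz: "f \<noteq> 0" using foc unfolding is_focus_def by blast
  have ff: "B f f \<noteq> 0" using nid unfolding ideal_pt_def .
  obtain x1 x2 where X: "ctangent Q x1" "ctangent A x1" "ctangent Q x2" "ctangent A x2"
    "\<not> (\<exists>k. x2 = k *s x1)" "cdot x1 (cvec f) = 0" "cdot x2 (cvec f) = 0"
    using foc ff unfolding is_focus_def by blast
  define A' where "A' = matrix_inv A"
  define Q' where "Q' = matrix_inv Q"
  have sA': "transpose A' = A'" unfolding A'_def by (rule sym_inv[OF symA invA])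
  have sQ': "transpose Q' = Q'" unfolding Q'_def by (rule sym_inv[OF sQ invQ])
  have iA': "invertible A'" unfolding A'_def by (rule inv_inv[OF invA])
  have iQ': "invertible Q'" unfolding Q'_def by (rule inv_inv[OF invQ])
  note tQ1 = ctangent_dual[OF sQ invQ X(1), folded Q'_def]
  note tA1 = ctangent_dual[OF symA invA X(2), folded A'_def]
  note tQ2 = ctangent_dual[OF sQ invQ X(3), folded Q'_def]
  note tA2 = ctangent_dual[OF symA invA X(4), folded A'_def]
  obtain eta0 where e0: "eta0 \<bullet> f = 0" "bil A' eta0 eta0 \<noteq> 0" using nonvanish[OF sA' iA' fnz] by blast
  obtain t where t: "\<And>eta. eta \<bullet> f = 0 \<Longrightarrow> bil Q' eta eta = t * bil A' eta eta"
    using lemmaF[OF sA' sQ' tA1(2) tA2(2) tQ1(2) tQ2(2) tA1(1) X(5) fnz X(6) X(7) e0] by blast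
  have tnz: "t \<noteq> 0"
  proof
    assume "t = 0"
    then have "\<And>eta. eta \<bullet> f = 0 \<Longrightarrow> bil Q' eta eta = 0" using t by simp
    then show False using nonvanish[OF sQ' iQ' fnz] by blast
  qed
  define M where "M = Q' - t *\<^sub>R A'"
  have sM: "transpose M = M" unfolding M_def transpose_diff_sc sA' sQ' ..
  have "\<And>eta. eta \<bullet> f = 0 \<Longrightarrow> bil M eta eta = 0" unfolding M_def bil_diff_sc using t by simp
  then obtain g where g: "\<And>x y. bil M x y = (x \<bullet> f) * (g \<bullet> y) + (g \<bullet> x) * (f \<bullet> y)"
    using lemmaG[OF sM fnz] by blast
  define d where "d = Q *v f"
  define e where "e = A *v f"
  define P where "P x y = B x y - t * bil Q x y" for x y
  have Pg: "P x y = (x \<bullet> d) * (g \<bullet> (A *v y)) + (g \<bullet> (Q *v x)) * B y f" for x y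
  proof -
    have "bil M (Q *v x) (A *v y) = P x y"
    proof -
      have "bil M (Q *v x) (A *v y) = bil Q' (Q *v x) (A *v y) - t * bil A' (Q *v x) (A *v y)"
        unfolding M_def bil_diff_sc ..
      also have "bil Q' (Q *v x) (A *v y) = B x y"
        unfolding bil_def symdot[OF sQ] Q'_def minv_vec[OF invQ] ..
      also have "bil A' (Q *v x) (A *v y) = bil Q x y"
        unfolding bil_def symdot[OF sQ] A'_def minv_vec2[OF invA] ..
      finally show ?thesis unfolding P_def .
    qed
    moreover have "(Q *v x) \<bullet> f = x \<bullet> d" unfolding d_def symdot[OF sQ] ..
    moreover have "f \<bullet> (A *v y) = B y f" using Bsym[of f y] by (simp add: bil_def)
    ultimately show ?thesis using g[of "Q *v x" "A *v y"] by simp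
  qed
  have Pf: "P x f = x \<bullet> e - t * (x \<bullet> d)" for x
    unfolding P_def e_def d_def by (simp add: bil_def)
  have Bfe: "B y f = y \<bullet> e" for y unfolding e_def by (simp add: bil_def)
  define s where "s = t + g \<bullet> (A *v f)"
  define h where "h y = g \<bullet> (A *v y) - s * (y \<bullet> e) / B f f" for y
  have beta: "g \<bullet> (Q *v x) = (x \<bullet> e - s * (x \<bullet> d)) / B f f" for x
  proof -
    have "(x \<bullet> d) * (g \<bullet> (A *v f)) + (g \<bullet> (Q *v x)) * B f f = x \<bullet> e - t * (x \<bullet> d)"
      using Pg[of x f] Pf[of x] by simp
    thus ?thesis unfolding s_def using ff by (simp add: field_simps)
  qed
  have Ph: "P x y = (x \<bullet> d) * h y + (x \<bullet> e) * (y \<bullet> e) / B f f" for x y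
  proof -
    have ffe: "f \<bullet> e \<noteq> 0" using ff Bfe[of f] by simp
    show ?thesis unfolding Pg beta h_def Bfe using ffe by (simp add: field_simps)
  qed
  have Psym: "P x y = P y x" for x y unfolding P_def using Bsym bil_sym[OF sQ] by metis
  have dnz: "d \<noteq> 0"
  proof
    assume "d = 0"
    have "f = matrix_inv Q *v d" unfolding d_def using minv_vec2[OF invQ] by simp
    then show False using \<open>d = 0\<close> fnz by simp
  qed
  define k where "k = h d / (d \<bullet> d)"
  have hk: "h y = k * (y \<bullet> d)" for y
  proof -
    have "(d \<bullet> d) * h y = (y \<bullet> d) * h d" using Ph[of d y] Ph[of y d] Psym[of d y] by (simp add: algebra_simps)
    thus ?thesis unfolding k_def using dnz by (simp add: field_simps)
  qed
  have "bil Q x y = (B x y - k * (x \<bullet> d) * (y \<bullet> d) - (x \<bullet> e) * (y \<bullet> e) / B f f) / t" for x y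
  proof -
    have "P x y = k * (x \<bullet> d) * (y \<bullet> d) + (x \<bullet> e) * (y \<bullet> e) / B f f" unfolding Ph hk by simp
    thus ?thesis unfolding P_def using tnz by (simp add: field_simps)
  qed
  thus ?thesis unfolding d_def e_def using tnz by blast
qed

end



theorem mainTheorem19:
  fixes A Q :: "real^3^3" and f :: "real^3" and c :: real
  assumes "transpose A = A" and "signature_mpp A"
    and "hyperbolic_conic A Q" and "det Q \<noteq> 0" and "\<not> cycle_conic A Q"
    and "is_focus A Q f" and "\<not> ideal_pt A f"
    and "c > 0"
  shows "\<exists>\<epsilon>>0. \<forall>x. hyperbolic_pt A x \<longrightarrow>
           (bil Q x x = 0 \<longleftrightarrow>
            delta_F A f x = \<epsilon> * delta_d A (polar_line Q f) c x)"
proof -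
  interpret lor A using assms(1,2) by unfold_locales
  have sQ: "transpose Q = Q" using assms(3) unfolding hyperbolic_conic_def by blast
  have invQ: "invertible Q" using assms(4) invertible_det_nz by blast
  have fnz: "f \<noteq> 0" using assms(6) unfolding is_focus_def by blast
  have ff: "B f f \<noteq> 0" using assms(7) unfolding ideal_pt_def .
  obtain t k where tk: "t \<noteq> 0" and QF: "\<And>x y. bil Q x y = (B x y - k * (x \<bullet> (Q *v f)) * (y \<bullet> (Q *v f))
            - (x \<bullet> (A *v f)) * (y \<bullet> (A *v f)) / B f f) / t"
    using focus_form[OF sQ assms(4) assms(6) assms(7)] by blast
  define d where "d = Q *v f"
  define e where "e = A *v f"
  have xe: "x \<bullet> e = B x f" for x unfolding e_def bil_def ..
  have xd: "x \<bullet> d = bil Q x f" for x unfolding d_def bil_def ..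
  have enz: "e \<noteq> 0" unfolding e_def using A_inj fnz by blast
  have dnz: "d \<noteq> 0"
  proof
    assume "d = 0"
    have "f = matrix_inv Q *v d" unfolding d_def using minv_vec2[OF invQ] by simp
    then show False using \<open>d = 0\<close> fnz by simp
  qed
  have knz: "k \<noteq> 0"
  proof
    assume k0: "k = 0"
    have "Q = (1/t) *\<^sub>R A + (- (1 / (t * B f f))) *\<^sub>R (\<chi> i j. e$i * e$j)"
    proof -
      have "Q$i$j = ((1/t) *\<^sub>R A + (- (1 / (t * B f f))) *\<^sub>R (\<chi> i j. e$i * e$j))$i$j" for i j
        using QF[of "axis i 1" "axis j 1"] k0 tk ff
        by (simp add: bil_axis e_def[symmetric] inner_axis' field_simps)
      thus ?thesis by (simp add: vec_eq_iff)
    qed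
    moreover have "- (1 / (t * B f f)) \<noteq> 0" using tk ff by simp
    ultimately have "cycle_conic A Q" unfolding cycle_conic_def using enz by blast
    thus False using assms(5) by blast
  qed
  define lam where "lam = - 1 / (t * B f f)"
  define kk where "kk = - k * B f f"
  have lnz: "lam \<noteq> 0" unfolding lam_def using tk ff by simp
  have kknz: "kk \<noteq> 0" unfolding kk_def using knz ff by simp
  have Qxx: "bil Q x x = lam * ((B x f)^2 - B f f * B x x - kk * (x \<bullet> d)^2)" for x
    using QF[of x x] unfolding lam_def kk_def d_def[symmetric] e_def[symmetric] xe
    using tk ff by (simp add: field_simps power2_eq_square)
  have kkpos: "kk > 0"
  proof (rule ccontr)
    assume "\<not> kk > 0"
    then have kneg: "kk < 0" using kknz by linarith
    obtain x0 where x0: "B x0 x0 < 0" "bil Q x0 x0 = 0"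
      using assms(3) unfolding hyperbolic_conic_def hyperbolic_pt_def by blast
    have N0: "(B x0 f)^2 - B f f * B x0 x0 = kk * (x0 \<bullet> d)^2" using Qxx[of x0] x0(2) lnz by simp
    have Nnn: "(B x0 f)^2 - B f f * B x0 x0 \<ge> 0" using rcs(1)[OF x0(1), of f] by (simp add: mult.commute)
    have "kk * (x0 \<bullet> d)^2 \<le> 0" using kneg by (simp add: mult_nonpos_nonneg)
    then have "(x0 \<bullet> d)^2 = 0" and Neq: "(B x0 f)^2 = B x0 x0 * B f f"
      using N0 Nnn kneg by (auto simp: algebra_simps)
    then have x0d: "x0 \<bullet> d = 0" by simp
    have fx0: "f = (B x0 f / B x0 x0) *\<^sub>R x0" using rcs(2)[OF x0(1) Neq] .
    have fd: "f \<bullet> d = 0" by (subst fx0) (simp add: x0d)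
    have "x \<bullet> (Q *v f) = 0" for x
    proof -
      have "bil Q x f = 0"
        using QF[of x f] fd ff unfolding d_def[symmetric] e_def[symmetric]
        by (simp add: xe Bsym[of f x] field_simps)
      thus ?thesis by (simp add: bil_def)
    qed
    then have "Q *v f = 0" by (metis inner_eq_zero_iff)
    then show False using dnz d_def by simp
  qed
  have pl: "polar_line Q f = d" unfolding polar_line_def d_def using sQ
    by (metis transpose_matrix_vector)
  obtain C where C: "C > 0" "\<And>x. B x x < 0 \<Longrightarrow> delta_d A d c x \<ge> 0 \<and> (delta_d A d c x)^2 = C * (x \<bullet> d)^2 / (- B x x)"
    using deltad[OF dnz assms(8)] by blast
  define eps where "eps = sqrt (kk / (C * \<bar>B f f\<bar>))"
  have epos: "eps > 0" unfolding eps_def using kkpos C(1) ff by simp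
  have eps2: "eps^2 = kk / (C * \<bar>B f f\<bar>)" unfolding eps_def using kkpos C(1) ff by simp
  have "bil Q x x = 0 \<longleftrightarrow> delta_F A f x = eps * delta_d A d c x" if xh: "hyperbolic_pt A x" for x
  proof -
    have xx: "B x x < 0" using xh unfolding hyperbolic_pt_def .
    note DF = deltaF[OF assms(7) xx]
    note DD = C(2)[OF xx]
    define N where "N = (B x f)^2 - B f f * B x x"
    have "delta_F A f x = eps * delta_d A d c x \<longleftrightarrow> (delta_F A f x)^2 = (eps * delta_d A d c x)^2"
    proof -
      have n1: "0 \<le> delta_F A f x" using DF by blast
      have n2: "0 \<le> eps * delta_d A d c x" using DD epos by simp
      show ?thesis using power2_eq_iff_nonneg[OF n1 n2] by simp
    qed
    also have "(eps * delta_d A d c x)^2 = kk * (x \<bullet> d)^2 / (\<bar>B f f\<bar> * - B x x)"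
      using DD C(1) ff xx by (simp add: power_mult_distrib eps2 field_simps)
    also have "(delta_F A f x)^2 = N / (\<bar>B f f\<bar> * - B x x)"
      using DF xx unfolding N_def by (simp add: abs_mult mult.commute)
    also have "N / (\<bar>B f f\<bar> * - B x x) = kk * (x \<bullet> d)^2 / (\<bar>B f f\<bar> * - B x x) \<longleftrightarrow> N = kk * (x \<bullet> d)^2"
      using ff xx by (simp add: divide_cancel_right)
    also have "\<dots> \<longleftrightarrow> bil Q x x = 0" unfolding Qxx N_def using lnz by (simp add: mult.commute)
    finally show ?thesis by simp
  qed
  thus ?thesis using epos pl by auto
qed

end
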